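(* Let $\Theta\subset\mathbb{R}^n$ be a nearly convex set and $F:\mathbb{R}^n\rightrightarrows\mathbb{R}^p$, $G:\mathbb{R}^n\rightrightarrows\mathbb{R}^q$ nearly convex set-valued mappings such that $\operatorname{ri}(\operatorname{dom} F)\cap\operatorname{ri}(\operatorname{dom} G)\cap\operatorname{ri}\Theta\neq\emptyset$. Then the set-valued mapping $\Phi:\mathbb{R}^n\times\mathbb{R}^q\rightrightarrows\mathbb{R}^p$ defined by $\Phi(x,y)=F(x)$ if $x\in\Theta$ and $y\in G(x)$, and $\Phi(x,y)=\emptyset$ otherwise, is nearly convex.
   Context: A set $\Omega\subset\mathbb{R}^k$ is nearly convex if there is a convex set $C$ with $C\subset\Omega\subset\overline{C}$. For an arbitrary set $\Omega$, $\operatorname{ri}\Omega=\{a\in\Omega:\exists\delta>0,\ B(a;\delta)\cap\operatorname{aff}\Omega\subset\Omega\}$. For a set-valued mapping $F$: $\operatorname{dom} F=\{x:F(x)\neq\emptyset\}$, $\operatorname{gph} F=\{(x,y):y\in F(x)\}$; $F$ is nearly convex if $\operatorname{gph} F$ is nearly convex. *)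

theory Defs
  imports "HOL-Analysis.Analysis"
begin

definition nearly_convex :: "'a::real_normed_vector set \<Rightarrow> bool" where
  "nearly_convex \<Omega> \<longleftrightarrow> (\<exists>C. convex C \<and> C \<subseteq> \<Omega> \<and> \<Omega> \<subseteq> closure C)"

definition sv_dom :: "('a \<Rightarrow> 'b set) \<Rightarrow> 'a set" where
  "sv_dom F = {x. F x \<noteq> {}}"

definition gph :: "('a \<Rightarrow> 'b set) \<Rightarrow> ('a \<times> 'b) set" where
  "gph F = {(x, y). y \<in> F x}"

definition nearly_convex_map :: "('a::real_normed_vector \<Rightarrow> 'b::real_normed_vector set) \<Rightarrow> bool" where
  "nearly_convex_map F \<longleftrightarrow> nearly_convex (gph F)"

end

theory Submission
  imports Defs
begin

lemma nc_ri:
  fixes C \<Omega> :: "'a::euclidean_space set"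
  assumes "convex C" "C \<subseteq> \<Omega>" "\<Omega> \<subseteq> closure C"
  shows "rel_interior \<Omega> = rel_interior C"
proof -
  have h1: "affine hull C \<subseteq> affine hull \<Omega>" using assms by (simp add: hull_mono)
  have "affine hull \<Omega> \<subseteq> affine hull (closure C)" using assms(3) by (rule hull_mono)
  hence ah: "affine hull \<Omega> = affine hull C" using h1 by simp
  have "rel_interior C \<subseteq> rel_interior \<Omega>" using rel_interior_mono[OF assms(2)] ah by simp
  moreover have "rel_interior \<Omega> \<subseteq> rel_interior (closure C)"
    using rel_interior_mono[OF assms(3)] ah by simp
  ultimately show ?thesis using convex_rel_interior_closure[OF assms(1)] by auto
qed

lemma dom_ri:
  fixes G :: "'a::euclidean_space \<Rightarrow> 'b::euclidean_space set"
  assumes "convex C" "C \<subseteq> gph G" "gph G \<subseteq> closure C" "x \<in> rel_interior (sv_dom G)"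
  shows "\<exists>y. (x, y) \<in> rel_interior C"
proof -
  have d: "sv_dom G = fst ` gph G" by (force simp: sv_dom_def gph_def image_iff)
  have c: "convex (fst ` C)" using assms(1) by (simp add: convex_linear_image linear_fst)
  have "fst ` C \<subseteq> sv_dom G" using assms(2) d by auto
  moreover have "sv_dom G \<subseteq> closure (fst ` C)"
    using assms(3) d closure_linear_image_subset[OF linear_fst, of C] by auto
  ultimately have "rel_interior (sv_dom G) = rel_interior (fst ` C)" using nc_ri c by blast
  also have "\<dots> = fst ` rel_interior C"
    using rel_interior_convex_linear_image[OF linear_fst assms(1)] by simp
  finally show ?thesis using assms(4) by force
qed

theorem theorem4p1:
  fixes \<Theta> :: "'n::euclidean_space set"
    and F :: "'n \<Rightarrow> 'p::euclidean_space set"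
    and G :: "'n \<Rightarrow> 'q::euclidean_space set"
  assumes "nearly_convex \<Theta>"
    and "nearly_convex_map F"
    and "nearly_convex_map G"
    and "rel_interior (sv_dom F) \<inter> rel_interior (sv_dom G) \<inter> rel_interior \<Theta> \<noteq> {}"
  shows "nearly_convex_map (\<lambda>(x, y). if x \<in> \<Theta> \<and> y \<in> G x then F x else {})"
proof -
  obtain CT where CT: "convex CT" "CT \<subseteq> \<Theta>" "\<Theta> \<subseteq> closure CT"
    using assms(1) by (auto simp: nearly_convex_def)
  obtain CF where CF: "convex CF" "CF \<subseteq> gph F" "gph F \<subseteq> closure CF"
    using assms(2) by (auto simp: nearly_convex_map_def nearly_convex_def)
  obtain CG where CG: "convex CG" "CG \<subseteq> gph G" "gph G \<subseteq> closure CG"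
    using assms(3) by (auto simp: nearly_convex_map_def nearly_convex_def)
  obtain x0 where x0: "x0 \<in> rel_interior (sv_dom F)" "x0 \<in> rel_interior (sv_dom G)"
    "x0 \<in> rel_interior \<Theta>" using assms(4) by blast
  obtain z0 where z0: "(x0, z0) \<in> rel_interior CF" using dom_ri[OF CF x0(1)] by blast
  obtain y0 where y0: "(x0, y0) \<in> rel_interior CG" using dom_ri[OF CG x0(2)] by blast
  have xt: "x0 \<in> rel_interior CT" using x0(3) nc_ri[OF CT] by simp
  define f :: "('n \<times> 'p) \<times> 'q \<Rightarrow> ('n \<times> 'q) \<times> 'p" where
    "f p = ((fst (fst p), snd p), snd (fst p))" for p
  have lf: "linear f" unfolding f_def by (rule linearI) (auto simp: algebra_simps)
  define C1 :: "(('n \<times> 'q) \<times> 'p) set" where "C1 = (CT \<times> UNIV) \<times> UNIV"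
  define C2 :: "(('n \<times> 'q) \<times> 'p) set" where "C2 = CG \<times> UNIV"
  define C3 :: "(('n \<times> 'q) \<times> 'p) set" where "C3 = f ` (CF \<times> UNIV)"
  have cv1: "convex C1" unfolding C1_def using CT(1) by (simp add: convex_Times)
  have cv2: "convex C2" unfolding C2_def using CG(1) by (simp add: convex_Times)
  have cvF: "convex (CF \<times> (UNIV :: 'q set))" using CF(1) by (simp add: convex_Times)
  have cv3: "convex C3" unfolding C3_def using cvF lf by (simp add: convex_linear_image)
  have r1: "rel_interior C1 = (rel_interior CT \<times> UNIV) \<times> UNIV"
    unfolding C1_def using CT(1) by (simp add: rel_interior_Times convex_Times)
  have r2: "rel_interior C2 = rel_interior CG \<times> UNIV"
    unfolding C2_def using CG(1) by (simp add: rel_interior_Times)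
  have r3: "rel_interior C3 = f ` (rel_interior CF \<times> UNIV)"
    unfolding C3_def using rel_interior_convex_linear_image[OF lf cvF] CF(1)
    by (simp add: rel_interior_Times)
  have pt: "((x0, y0), z0) \<in> rel_interior C1 \<inter> rel_interior C2 \<inter> rel_interior C3"
    using xt y0 z0 r1 r2 r3 by (force simp: f_def image_iff)
  let ?P = "(\<lambda>(x, y). if x \<in> \<Theta> \<and> y \<in> G x then F x else {})"
  have clI: "closure (\<Inter>{C1, C2, C3}) = \<Inter>(closure ` {C1, C2, C3})"
    by (rule closure_Inter_convex) (use cv1 cv2 cv3 pt in auto)
  have sub: "C1 \<inter> C2 \<inter> C3 \<subseteq> gph ?P"
  proof
    fix p assume p: "p \<in> C1 \<inter> C2 \<inter> C3"
    obtain x y z where pe: "p = ((x, y), z)" by (metis prod.collapse)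
    have "x \<in> \<Theta>" using p pe CT(2) C1_def by auto
    moreover have "y \<in> G x" using p pe CG(2) C2_def by (auto simp: gph_def)
    moreover have "z \<in> F x" using p pe CF(2) C3_def by (auto simp: gph_def f_def)
    ultimately show "p \<in> gph ?P" using pe by (simp add: gph_def)
  qed
  have sup: "gph ?P \<subseteq> closure C1 \<inter> closure C2 \<inter> closure C3"
  proof
    fix p assume p: "p \<in> gph ?P"
    obtain x y z where pe: "p = ((x, y), z)" by (metis prod.collapse)
    have h: "x \<in> \<Theta>" "y \<in> G x" "z \<in> F x" using p pe
      by (auto simp: gph_def split: if_splits)
    have "p \<in> (closure CT \<times> UNIV) \<times> UNIV" using h CT(3) pe by auto
    hence a1: "p \<in> closure C1" unfolding C1_def by (simp add: closure_Times)
    have "p \<in> closure CG \<times> UNIV" using h CG(3) pe by (auto simp: gph_def)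
    hence a2: "p \<in> closure C2" unfolding C2_def by (simp add: closure_Times)
    have "((x, z), y) \<in> closure (CF \<times> UNIV)" using h CF(3) by (auto simp: gph_def closure_Times)
    hence "f ((x, z), y) \<in> closure C3" unfolding C3_def
      using closure_linear_image_subset[OF lf, of "CF \<times> UNIV"] by blast
    hence a3: "p \<in> closure C3" using pe by (simp add: f_def)
    show "p \<in> closure C1 \<inter> closure C2 \<inter> closure C3" using a1 a2 a3 by blast
  qed
  show ?thesis unfolding nearly_convex_map_def nearly_convex_def
    apply (rule exI[of _ "C1 \<inter> C2 \<inter> C3"])
    using sub sup clI cv1 cv2 cv3 by (auto simp: convex_Int Int_assoc)
qed

end
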